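(* Assume separability and full support, and let $\mu$ be the group-level matching patterns of the stable outcome for surplus $\Phi$ and margins $\bm r$, and $(\bm U,\bm V)$ the solution of $\min_{\bm U,\bm V}\{G(\bm U,\bm n)+H(\bm V,\bm m):U_{xy}+V_{xy}\ge\Phi_{xy}\ \forall x,y\}$. Then: 1. $\bm U=\frac{\partial G^*}{\partial\mu}(\mu,\bm n)$ and $\bm V=\frac{\partial H^*}{\partial\mu}(\mu,\bm m)$; 2. $U_{xy}+V_{xy}=\Phi_{xy}$ for every $x\in\mathcal X,y\in\mathcal Y$, and consequently $$\Phi_{xy}=-\frac{\partial\mathcal E}{\partial\mu_{xy}}(\mu,\bm r)=\frac{\partial G_x^*}{\partial\mu_{y|x}}(\mu_{\cdot|x})+\frac{\partial H_y^*}{\partial\mu_{x|y}}(\mu_{\cdot|y}),$$ where $\mu_{y|x}=\mu_{xy}/n_x$, $\mu_{x|y}=\mu_{xy}/m_y$, $\mu_{\cdot|x}=(\mu_{y|x})_{y\in\mathcal Y}$ and $\mu_{\cdot|y}=(\mu_{x|y})_{x\in\mathcal X}$.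
   Context: Setting. $\mathcal X$ and $\mathcal Y$ are finite nonempty sets (groups of men and of women); $\mathcal X_0=\mathcal X\cup\{0\}$, $\mathcal Y_0=\mathcal Y\cup\{0\}$, where $0$ stands for singlehood. There is a continuum of men and of women: $n_x>0$ is the mass of men of group $x$, $m_y>0$ the mass of women of group $y$, and $\bm r=(\bm n,\bm m)$. Each man $i$ has a group $x_i\in\mathcal X$ and a vector $\varepsilon_i=(\varepsilon_{iy})_{y\in\mathcal Y_0}\in\mathbb R^{\mathcal Y_0}$ whose distribution among men of group $x$ is $P_x$; each woman $j$ has a group $y_j\in\mathcal Y$ and a vector $\eta_j=(\eta_{xj})_{x\in\mathcal X_0}\in\mathbb R^{\mathcal X_0}$ whose distribution among women of group $y$ is $Q_y$. Utility is perfectly transferable. Separability: there is a matrix $\Phi=(\Phi_{xy})_{x\in\mathcal X,y\in\mathcal Y}$ such that the joint surplus of a match between man $i$ and woman $j$ is $\tilde\Phi_{ij}=\Phi_{x_iy_j}+\varepsilon_{iy_j}+\eta_{x_ij}$, the utility of a single man $i$ is $\varepsilon_{i0}$ and that of a single woman $j$ is $\eta_{0j}$; moreover $\max_{y\in\mathcal Y_0}|\varepsilon_y|$ has finite expectation under each $P_x$ and $\max_{x\in\mathcal X_0}|\eta_x|$ has finite expectation under each $Q_y$. Full support: each $P_x$ has full support on $\mathbb R^{\mathcal Y_0}$ and each $Q_y$ on $\mathbb R^{\mathcal X_0}$, and all are absolutely continuous with respect to Lebesgue measure. A stable outcome is an assignment in which each individual has at most one partner, together with utilities $\tilde u_i,\tilde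 v_j$ such that $\tilde u_i\ge\varepsilon_{i0}$ with equality if $i$ is single, $\tilde v_j\ge\eta_{0j}$ with equality if $j$ is single, and $\tilde u_i+\tilde v_j\ge\tilde\Phi_{ij}$ for all $i,j$, with equality if $i$ and $j$ are matched together. At the group level a matching is $\mu=(\mu_{xy})_{x\in\mathcal X,y\in\mathcal Y}$, $\mu_{xy}$ the mass of couples formed by a man of group $x$ and a woman of group $y$. Emax functions: for $\bm U=(U_{xy})\in\mathbb R^{\mathcal X\times\mathcal Y}$ with the convention $U_{x0}=0$, $G_x(U_{x\cdot})=\mathbb E_{\varepsilon\sim P_x}\max_{y\in\mathcal Y_0}(U_{xy}+\varepsilon_y)$ and $G(\bm U,\bm n)=\sum_{x}n_xG_x(U_{x\cdot})$; for $\bm V\in\mathbb R^{\mathcal X\times\mathcal Y}$ with $V_{0y}=0$, $H_y(V_{\cdot y})=\mathbb E_{\eta\sim Q_y}\max_{x\in\mathcal X_0}(V_{xy}+\eta_x)$ and $H(\bm V,\bm m)=\sum_y m_yH_y(V_{\cdot y})$. For $\nu\in\mathbb R^{\mathcal Y}$, $G_x^*(\nu)=\sup_{U\in\mathbb R^{\mathcal Y}}(\sum_y\nu_yU_y-G_x(U))$ if $\sum_y\nu_y\le1$ and $+\infty$ otherwise; $H_y^*$ is defined symmetrically on $\mathbb R^{\mathcal X}$. Legendre–Fenchel transforms: $G^*(\mu,\bm n)=\sup_{\bm U}\left(\sum_{x,y}\mu_{xy}U_{xy}-G(\bm U,\bm n)\right)=\sum_x n_xG_x^*(\mu_{x\cdot}/n_x)$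 and $H^*(\mu,\bm m)=\sup_{\bm V}\left(\sum_{x,y}\mu_{xy}V_{xy}-H(\bm V,\bm m)\right)=\sum_ym_yH_y^*(\mu_{\cdot y}/m_y)$. The generalized entropy of matching is $\mathcal E(\mu,\bm r)=-G^*(\mu,\bm n)-H^*(\mu,\bm m)$. *)

theory Defs
  imports "HOL-Probability.Probability"
begin

text \<open>Groups of men are elements of a finite type 'x, groups of women of a finite type 'y.
  Singlehood is None in 'y option / 'x option.  A man of group x has a heterogeneity vector
  e :: real^('y option) (e $ None is his singles utility), a woman of group y has
  h :: real^('x option).\<close>

definition emax_men :: "(real^('y::finite option)) measure \<Rightarrow> ('y \<Rightarrow> real) \<Rightarrow> real" where
  "emax_men P U = integral\<^sup>L P (\<lambda>e. Max (range (\<lambda>z. (case z of None \<Rightarrow> 0 | Some y \<Rightarrow> U y) + e $ z)))"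

definition emax_women :: "(real^('x::finite option)) measure \<Rightarrow> ('x \<Rightarrow> real) \<Rightarrow> real" where
  "emax_women Q V = integral\<^sup>L Q (\<lambda>h. Max (range (\<lambda>z. (case z of None \<Rightarrow> 0 | Some x \<Rightarrow> V x) + h $ z)))"

definition Gtot :: "('x::finite \<Rightarrow> real) \<Rightarrow> ('x \<Rightarrow> (real^('y::finite option)) measure)
    \<Rightarrow> ('x \<times> 'y \<Rightarrow> real) \<Rightarrow> real" where
  "Gtot n P U = (\<Sum>x\<in>UNIV. n x * emax_men (P x) (\<lambda>y. U (x, y)))"

definition Htot :: "('y::finite \<Rightarrow> real) \<Rightarrow> ('y \<Rightarrow> (real^('x::finite option)) measure)
    \<Rightarrow> ('x \<times> 'y \<Rightarrow> real) \<Rightarrow> real" where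
  "Htot m Q V = (\<Sum>y\<in>UNIV. m y * emax_women (Q y) (\<lambda>x. V (x, y)))"

definition Gstar_x :: "(real^('y::finite option)) measure \<Rightarrow> ('y \<Rightarrow> real) \<Rightarrow> ereal" where
  "Gstar_x P \<nu> = (if (\<Sum>y\<in>UNIV. \<nu> y) \<le> 1
      then Sup (range (\<lambda>U. ereal ((\<Sum>y\<in>UNIV. \<nu> y * U y) - emax_men P U))) else \<infinity>)"

definition Hstar_y :: "(real^('x::finite option)) measure \<Rightarrow> ('x \<Rightarrow> real) \<Rightarrow> ereal" where
  "Hstar_y Q \<nu> = (if (\<Sum>x\<in>UNIV. \<nu> x) \<le> 1
      then Sup (range (\<lambda>V. ereal ((\<Sum>x\<in>UNIV. \<nu> x * V x) - emax_women Q V))) else \<infinity>)"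

definition Gstar :: "('x::finite \<Rightarrow> real) \<Rightarrow> ('x \<Rightarrow> (real^('y::finite option)) measure)
    \<Rightarrow> ('x \<times> 'y \<Rightarrow> real) \<Rightarrow> ereal" where
  "Gstar n P \<mu> = Sup (range (\<lambda>U. ereal ((\<Sum>p\<in>UNIV. \<mu> p * U p) - Gtot n P U)))"

definition Hstar :: "('y::finite \<Rightarrow> real) \<Rightarrow> ('y \<Rightarrow> (real^('x::finite option)) measure)
    \<Rightarrow> ('x \<times> 'y \<Rightarrow> real) \<Rightarrow> ereal" where
  "Hstar m Q \<mu> = Sup (range (\<lambda>V. ereal ((\<Sum>p\<in>UNIV. \<mu> p * V p) - Htot m Q V)))"

definition entropy :: "('x::finite \<Rightarrow> real) \<Rightarrow> ('y::finite \<Rightarrow> real)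
    \<Rightarrow> ('x \<Rightarrow> (real^('y option)) measure) \<Rightarrow> ('y \<Rightarrow> (real^('x option)) measure)
    \<Rightarrow> ('x \<times> 'y \<Rightarrow> real) \<Rightarrow> ereal" where
  "entropy n m P Q \<mu> = - Gstar n P \<mu> - Hstar m Q \<mu>"

definition has_partial :: "(('a \<Rightarrow> real) \<Rightarrow> ereal) \<Rightarrow> ('a \<Rightarrow> real) \<Rightarrow> 'a \<Rightarrow> real \<Rightarrow> bool" where
  "has_partial f p k d \<longleftrightarrow>
     (\<forall>\<^sub>F t in nhds (p k). \<bar>f (p(k := t))\<bar> \<noteq> \<infinity>) \<and>
     ((\<lambda>t. real_of_ereal (f (p(k := t)))) has_real_derivative d) (at (p k))"

text \<open>Standing assumptions: separability (built into the model), integrability, full support,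
  absolute continuity.\<close>
definition heterogeneity_ok :: "('y::finite \<Rightarrow> real) \<Rightarrow> ('y \<Rightarrow> (real^('x::finite option)) measure) \<Rightarrow> bool" where
  "heterogeneity_ok w D \<longleftrightarrow> (\<forall>y. 0 < w y \<and> prob_space (D y) \<and> sets (D y) = sets borel
      \<and> absolutely_continuous lborel (D y)
      \<and> (\<forall>S. open S \<and> S \<noteq> {} \<longrightarrow> 0 < emeasure (D y) S)
      \<and> integrable (D y) (\<lambda>e. Max (range (\<lambda>z. \<bar>e $ z\<bar>))))"

text \<open>Individuals are identified with their types:
  a man is (x, e), a woman is (y, h); the population of men of group x is n x \<cdot> P x.
  An assignment is given by finite measures \<pi> x y on couples (e, h) of a man of group x and a
  woman of group y, such that no individual is matched more than once (marginal constraints).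
  Utilities u x e, v y h satisfy the stability inequalities, with equality for matched couples
  (a.e.) and for singles (a.e.: every man with u > e_0 is matched).\<close>
definition stable_outcome ::
  "('x::finite \<times> 'y::finite \<Rightarrow> real) \<Rightarrow> ('x \<Rightarrow> real) \<Rightarrow> ('y \<Rightarrow> real)
   \<Rightarrow> ('x \<Rightarrow> (real^('y option)) measure) \<Rightarrow> ('y \<Rightarrow> (real^('x option)) measure)
   \<Rightarrow> ('x \<Rightarrow> 'y \<Rightarrow> ((real^('y option)) \<times> (real^('x option))) measure)
   \<Rightarrow> ('x \<Rightarrow> real^('y option) \<Rightarrow> real) \<Rightarrow> ('y \<Rightarrow> real^('x option) \<Rightarrow> real) \<Rightarrow> bool" where
  "stable_outcome \<Phi> n m P Q \<pi> u v \<longleftrightarrow>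
     (\<forall>x y. finite_measure (\<pi> x y) \<and> sets (\<pi> x y) = sets borel)
   \<and> (\<forall>x A. A \<in> sets borel \<longrightarrow>
        (\<Sum>y\<in>UNIV. emeasure (\<pi> x y) (fst -` A)) \<le> ennreal (n x) * emeasure (P x) A)
   \<and> (\<forall>y B. B \<in> sets borel \<longrightarrow>
        (\<Sum>x\<in>UNIV. emeasure (\<pi> x y) (snd -` B)) \<le> ennreal (m y) * emeasure (Q y) B)
   \<and> (\<forall>x. u x \<in> borel_measurable borel) \<and> (\<forall>y. v y \<in> borel_measurable borel)
   \<and> (\<forall>x e. e $ None \<le> u x e) \<and> (\<forall>y h. h $ None \<le> v y h)
   \<and> (\<forall>x y e h. \<Phi> (x, y) + e $ Some y + h $ Some x \<le> u x e + v y h)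
   \<and> (\<forall>x y. AE p in \<pi> x y. u x (fst p) + v y (snd p) = \<Phi> (x, y) + fst p $ Some y + snd p $ Some x)
   \<and> (\<forall>x. ennreal (n x) * emeasure (P x) {e. e $ None < u x e}
          = (\<Sum>y\<in>UNIV. emeasure (\<pi> x y) (fst -` {e. e $ None < u x e})))
   \<and> (\<forall>y. ennreal (m y) * emeasure (Q y) {h. h $ None < v y h}
          = (\<Sum>x\<in>UNIV. emeasure (\<pi> x y) (snd -` {h. h $ None < v y h})))"

definition group_matching :: "('x \<Rightarrow> 'y \<Rightarrow> 'a measure) \<Rightarrow> ('x \<times> 'y \<Rightarrow> real)" where
  "group_matching \<pi> = (\<lambda>(x, y). measure (\<pi> x y) (space (\<pi> x y)))"

end

theory Submission
  imports Defs
begin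


lemma sum_upd_mult:
  fixes p U :: "'a::finite \<Rightarrow> real"
  shows "(\<Sum>a\<in>UNIV. (p(k:=t)) a * U a) = (\<Sum>a\<in>UNIV. p a * U a) + (t - p k) * U k"
proof -
  have "(\<Sum>a\<in>UNIV. (p(k:=t)) a * U a) = (\<Sum>a\<in>UNIV. p a * U a + (if a = k then (t - p k) * U k else 0))"
    by (rule sum.cong) (auto simp: algebra_simps)
  also have "\<dots> = (\<Sum>a\<in>UNIV. p a * U a) + (t - p k) * U k"
    by (simp add: sum.distrib)
  finally show ?thesis .
qed

lemma conj_partial:
  fixes f :: "('a::finite \<Rightarrow> real) \<Rightarrow> real" and F :: "('a \<Rightarrow> real) \<Rightarrow> ereal"
  assumes B0: "\<And>W. f U0 + (\<Sum>a\<in>UNIV. p a * W a) \<le> f (\<lambda>a. U0 a + W a)"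
    and coer: "\<And>\<epsilon>. \<epsilon> > 0 \<Longrightarrow> \<exists>c>0. \<forall>W. \<epsilon> \<le> \<bar>W k\<bar> \<longrightarrow>
                 c * \<bar>W k\<bar> \<le> f (\<lambda>a. U0 a + W a) - f U0 - (\<Sum>a\<in>UNIV. p a * W a)"
    and FF: "\<forall>\<^sub>F t in nhds (p k). F (p(k:=t)) = Sup (range (\<lambda>U. ereal ((\<Sum>a\<in>UNIV. (p(k:=t)) a * U a) - f U)))"
  shows "has_partial F p k (U0 k)"
proof -
  define C where "C = (\<Sum>a\<in>UNIV. p a * U0 a) - f U0"
  define S where "S t = Sup (range (\<lambda>U. ereal ((\<Sum>a\<in>UNIV. (p(k:=t)) a * U a) - f U)))" for t
  have low: "ereal (C + (t - p k) * U0 k) \<le> S t" for t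
  proof -
    have "ereal ((\<Sum>a\<in>UNIV. (p(k:=t)) a * U0 a) - f U0) \<le> S t"
      unfolding S_def by (rule SUP_upper) simp
    then show ?thesis unfolding sum_upd_mult C_def by (simp add: algebra_simps)
  qed
  have up: "\<exists>c>0. \<forall>t. \<bar>t - p k\<bar> \<le> c \<longrightarrow> S t \<le> ereal (C + (t - p k) * U0 k + \<epsilon> * \<bar>t - p k\<bar>)"
    if eps: "\<epsilon> > 0" for \<epsilon>
  proof -
    obtain c where c: "c > 0" and cW: "\<And>W. \<epsilon> \<le> \<bar>W k\<bar> \<Longrightarrow>
                 c * \<bar>W k\<bar> \<le> f (\<lambda>a. U0 a + W a) - f U0 - (\<Sum>a\<in>UNIV. p a * W a)"
      using coer[OF eps] by blast
    have "S t \<le> ereal (C + (t - p k) * U0 k + \<epsilon> * \<bar>t - p k\<bar>)" if t: "\<bar>t - p k\<bar> \<le> c" for t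
      unfolding S_def
    proof (rule SUP_least)
      fix U assume "U \<in> (UNIV :: ('a \<Rightarrow> real) set)"
      define W where "W a = U a - U0 a" for a
      have UW: "(\<lambda>a. U0 a + W a) = U" by (auto simp: W_def)
      define B where "B = f U - f U0 - (\<Sum>a\<in>UNIV. p a * W a)"
      have B0': "0 \<le> B" using B0[of W] unfolding UW B_def by simp
      have sW: "(\<Sum>a\<in>UNIV. p a * U a) = (\<Sum>a\<in>UNIV. p a * U0 a) + (\<Sum>a\<in>UNIV. p a * W a)"
        by (simp add: W_def sum.distrib[symmetric] algebra_simps)
      have key: "(t - p k) * W k - B \<le> \<epsilon> * \<bar>t - p k\<bar>"
      proof (cases "\<bar>W k\<bar> < \<epsilon>")
        case True
        have "(t - p k) * W k \<le> \<bar>t - p k\<bar> * \<bar>W k\<bar>"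
          by (metis abs_ge_self abs_mult)
        also have "\<dots> \<le> \<bar>t - p k\<bar> * \<epsilon>"
          using True by (intro mult_left_mono) auto
        finally show ?thesis using B0' by (simp add: mult.commute)
      next
        case False
        then have "c * \<bar>W k\<bar> \<le> B" using cW[of W] unfolding UW B_def by simp
        moreover have "(t - p k) * W k \<le> \<bar>t - p k\<bar> * \<bar>W k\<bar>"
          by (metis abs_ge_self abs_mult)
        moreover have "\<bar>t - p k\<bar> * \<bar>W k\<bar> \<le> c * \<bar>W k\<bar>"
          using t by (intro mult_right_mono) auto
        moreover have "0 \<le> \<epsilon> * \<bar>t - p k\<bar>" using eps by simp
        ultimately show ?thesis by linarith
      qed
      have "(\<Sum>a\<in>UNIV. (p(k:=t)) a * U a) - f U
            = C + (t - p k) * U0 k + ((t - p k) * W k - B)"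
        unfolding sum_upd_mult sW C_def B_def W_def by (simp add: algebra_simps)
      also have "\<dots> \<le> C + (t - p k) * U0 k + \<epsilon> * \<bar>t - p k\<bar>"
        using key by simp
      finally show "ereal ((\<Sum>a\<in>UNIV. (p(k:=t)) a * U a) - f U)
           \<le> ereal (C + (t - p k) * U0 k + \<epsilon> * \<bar>t - p k\<bar>)" by simp
    qed
    with c show ?thesis by blast
  qed
  obtain c1 where c1: "c1 > 0" and c1b: "\<And>t. \<bar>t - p k\<bar> \<le> c1 \<Longrightarrow> S t \<le> ereal (C + (t - p k) * U0 k + 1 * \<bar>t - p k\<bar>)"
    using up[of 1] by auto
  have SC: "S (p k) = ereal C"
    using low[of "p k"] c1b[of "p k"] c1 by simp
  have FF': "\<forall>\<^sub>F t in nhds (p k). F (p(k:=t)) = S t" using FF unfolding S_def .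
  have near: "\<forall>\<^sub>F t in nhds (p k). \<bar>t - p k\<bar> \<le> c" if "c > 0" for c
    unfolding eventually_nhds_metric using that by (intro exI[of _ c]) (auto simp: dist_real_def)
  have fin: "\<forall>\<^sub>F t in nhds (p k). \<bar>F (p(k:=t))\<bar> \<noteq> \<infinity>"
    using eventually_conj[OF FF' near[OF c1]]
  proof (rule eventually_mono)
    fix t assume "F (p(k:=t)) = S t \<and> \<bar>t - p k\<bar> \<le> c1"
    with low[of t] c1b[of t] show "\<bar>F (p(k:=t))\<bar> \<noteq> \<infinity>" by auto
  qed
  have Fpk: "F p = ereal C"
  proof -
    have "F (p(k:=p k)) = S (p k)" using eventually_nhds_x_imp_x[OF FF'] .
    then show ?thesis using SC by simp
  qed
  have deriv: "((\<lambda>t. real_of_ereal (F (p(k := t)))) has_real_derivative U0 k) (at (p k))"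
    unfolding has_field_derivative_iff
  proof (rule tendstoI)
    fix e :: real assume e: "e > 0"
    obtain c where c: "c > 0" and cb: "\<And>t. \<bar>t - p k\<bar> \<le> c \<Longrightarrow> S t \<le> ereal (C + (t - p k) * U0 k + (e/2) * \<bar>t - p k\<bar>)"
      using up[of "e/2"] e by auto
    have "\<forall>\<^sub>F t in nhds (p k). F (p(k:=t)) = S t \<and> \<bar>t - p k\<bar> \<le> c"
      using eventually_conj[OF FF' near[OF c]] .
    then have "\<forall>\<^sub>F t in at (p k). F (p(k:=t)) = S t \<and> \<bar>t - p k\<bar> \<le> c \<and> t \<noteq> p k"
      unfolding eventually_at_filter by (rule eventually_mono) auto
    then show "\<forall>\<^sub>F t in at (p k). dist ((real_of_ereal (F (p(k := t))) - real_of_ereal (F (p(k := p k))))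
        / (t - p k)) (U0 k) < e"
    proof (rule eventually_mono)
      fix t assume t: "F (p(k:=t)) = S t \<and> \<bar>t - p k\<bar> \<le> c \<and> t \<noteq> p k"
      define d where "d = t - p k"
      have d0: "d \<noteq> 0" using t d_def by simp
      obtain r where r: "S t = ereal r" using low[of t] cb[of t] t by (cases "S t") auto
      have r1: "C + d * U0 k \<le> r" and r2: "r \<le> C + d * U0 k + (e/2) * \<bar>d\<bar>"
        using low[of t] cb[of t] t r d_def by auto
      have "\<bar>r - C - d * U0 k\<bar> \<le> (e/2) * \<bar>d\<bar>" using r1 r2 by simp
      then have "\<bar>(r - C) / d - U0 k\<bar> \<le> e/2"
        using d0 by (simp add: abs_divide field_simps)
      moreover have "F (p(k := p k)) = ereal C" using Fpk by simp
      ultimately show "dist ((real_of_ereal (F (p(k := t))) - real_of_ereal (F (p(k := p k)))) / (t - p k)) (U0 k) < e"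
        using t r e by (simp add: dist_real_def d_def)
    qed
  qed
  show ?thesis unfolding has_partial_def using fin deriv by blast
qed



definition Ut :: "('i \<Rightarrow> real) \<Rightarrow> 'i option \<Rightarrow> real" where
  "Ut U z = (case z of None \<Rightarrow> 0 | Some y \<Rightarrow> U y)"

definition emx :: "('i::finite \<Rightarrow> real) \<Rightarrow> real^('i option) \<Rightarrow> real" where
  "emx U e = Max (range (\<lambda>z. Ut U z + e$z))"

definition Astr :: "('i::finite \<Rightarrow> real) \<Rightarrow> 'i option \<Rightarrow> (real^('i option)) set" where
  "Astr U z = {e. \<forall>z'. z' \<noteq> z \<longrightarrow> Ut U z' + e$z' < Ut U z + e$z}"

definition good :: "(real^('i::finite option)) measure \<Rightarrow> bool" where
  "good D \<longleftrightarrow> prob_space D \<and> sets D = sets borel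
      \<and> absolutely_continuous lborel D
      \<and> (\<forall>S. open S \<and> S \<noteq> {} \<longrightarrow> 0 < emeasure D S)
      \<and> integrable D (\<lambda>e. Max (range (\<lambda>z. \<bar>e $ z\<bar>)))"

lemma emax_men_eq: "emax_men D U = integral\<^sup>L D (emx U)"
  by (simp add: emax_men_def emx_def[abs_def] Ut_def)

lemma emax_women_eq: "emax_women D U = integral\<^sup>L D (emx U)"
  by (simp add: emax_women_def emx_def[abs_def] Ut_def)

lemma Ut_add: "Ut (\<lambda>y. U y + W y) z = Ut U z + Ut W z"
  by (simp add: Ut_def split: option.split)

lemma emx_ge: "Ut U z + e$z \<le> emx U e"
  unfolding emx_def by (rule Max_ge) auto

lemma emx_attained: "\<exists>z. emx U e = Ut U z + e$z"
proof -
  have "emx U e \<in> range (\<lambda>z. Ut U z + e$z)"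
    unfolding emx_def by (rule Max_in) auto
  then show ?thesis by auto
qed

lemma Maxabs_ge: "\<bar>(e::real^'o::finite)$z\<bar> \<le> Max (range (\<lambda>z. \<bar>e $ z\<bar>))"
  by (rule Max_ge) auto

lemma emx_bound: "\<bar>emx U e\<bar> \<le> (\<Sum>z\<in>UNIV. \<bar>Ut U z\<bar>) + Max (range (\<lambda>z. \<bar>e $ z\<bar>))"
proof -
  obtain z where z: "emx U e = Ut U z + e$z" using emx_attained by blast
  have "\<bar>Ut U z\<bar> \<le> (\<Sum>z\<in>UNIV. \<bar>Ut U z\<bar>)"
    by (rule member_le_sum) auto
  moreover have "Ut U None + e$None \<le> emx U e" by (rule emx_ge)
  moreover have "0 \<le> (\<Sum>z\<in>UNIV. \<bar>Ut U z\<bar>)" by (simp add: sum_nonneg)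
  moreover have "Ut U None = 0" by (simp add: Ut_def)
  moreover note Maxabs_ge[of e z] Maxabs_ge[of e None]
  ultimately show ?thesis using z by (simp only: abs_le_iff) linarith
qed

lemma emx_measurable[measurable]: "emx U \<in> borel_measurable borel"
  unfolding emx_def by measurable

lemma open_Astr: "open (Astr U z)"
proof -
  have "Astr U z = (\<Inter>z'\<in>{z'. z' \<noteq> z}. {e. Ut U z' + e$z' < Ut U z + e$z})"
    by (auto simp: Astr_def)
  moreover have "open {e::real^_. Ut U z' + e$z' < Ut U z + e$z}" for z'
    by (intro open_Collect_less continuous_intros)
  ultimately show ?thesis by auto
qed

lemma Astr_disj: "z1 \<noteq> z2 \<Longrightarrow> e \<in> Astr U z1 \<Longrightarrow> e \<notin> Astr U z2"
proof
  assume "z1 \<noteq> z2" "e \<in> Astr U z1" "e \<in> Astr U z2"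
  then have "Ut U z2 + e$z2 < Ut U z1 + e$z1" "Ut U z1 + e$z1 < Ut U z2 + e$z2"
    unfolding Astr_def by auto
  then show False by simp
qed

lemma emx_Astr: "e \<in> Astr U z \<Longrightarrow> emx U e = Ut U z + e$z"
proof -
  assume a: "e \<in> Astr U z"
  obtain z' where z': "emx U e = Ut U z' + e$z'" using emx_attained by blast
  have "Ut U z + e$z \<le> emx U e" by (rule emx_ge)
  moreover have "z' = z"
  proof (rule ccontr)
    assume "z' \<noteq> z"
    then have "Ut U z' + e$z' < Ut U z + e$z" using a unfolding Astr_def by auto
    then show False using \<open>Ut U z + e$z \<le> emx U e\<close> z' by simp
  qed
  ultimately show ?thesis using z' by simp
qed

lemma notie_Astr:
  assumes "\<forall>a b. a \<noteq> b \<longrightarrow> Ut U a + e$a \<noteq> Ut U b + e$b"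
  shows "\<exists>z. e \<in> Astr U z"
proof -
  obtain z where z: "emx U e = Ut U z + e$z" using emx_attained by blast
  have "e \<in> Astr U z"
    unfolding Astr_def
  proof (intro CollectI allI impI)
    fix z' assume "z' \<noteq> z"
    then show "Ut U z' + e $ z' < Ut U z + e $ z"
    proof -
      have "Ut U z' + e $ z' \<le> Ut U z + e $ z" using emx_ge[of U z' e] z by simp
      moreover have "Ut U z' + e $ z' \<noteq> Ut U z + e $ z" using assms \<open>z' \<noteq> z\<close> by blast
      ultimately show ?thesis by simp
    qed
  qed
  then show ?thesis by blast
qed

lemma sum_ind_Astr:
  assumes "e \<in> Astr U b"
  shows "(\<Sum>y\<in>UNIV. indicator (Astr U (Some y)) e * W y) = Ut W b"
proof -
  have "(\<Sum>y\<in>UNIV. indicator (Astr U (Some y)) e * W y) = (\<Sum>y\<in>UNIV. if Some y = b then W y else 0)"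
    using assms Astr_disj by (intro sum.cong) (auto simp: indicator_def)
  also have "\<dots> = Ut W b"
    by (cases b) (auto simp: Ut_def)
  finally show ?thesis .
qed

context
  fixes D :: "(real^('i::finite option)) measure"
  assumes gD: "good D"
begin

lemma gD_prob: "prob_space D" using gD by (simp add: good_def)
lemma gD_fin: "finite_measure D" using gD_prob by (simp add: prob_space_def)
lemma gD_sets: "sets D = sets borel" using gD by (simp add: good_def)
lemma gD_space: "space D = UNIV"
  using sets_eq_imp_space_eq[OF gD_sets] by simp

lemma gD_open_pos: "open S \<Longrightarrow> S \<noteq> {} \<Longrightarrow> 0 < measure D S"
proof -
  assume "open S" "S \<noteq> {}"
  then have "0 < emeasure D S" using gD by (simp add: good_def)
  moreover have "emeasure D S = ennreal (measure D S)"
    using finite_measure.emeasure_eq_measure[OF gD_fin] .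
  ultimately show ?thesis by simp
qed

lemma gD_int_emx: "integrable D (emx U)"
proof (rule Bochner_Integration.integrable_bound)
  show "integrable D (\<lambda>e. (\<Sum>z\<in>UNIV. \<bar>Ut U z\<bar>) + Max (range (\<lambda>z. \<bar>e $ z\<bar>)))"
  proof (rule Bochner_Integration.integrable_add)
    show "integrable D (\<lambda>e. (\<Sum>z\<in>UNIV. \<bar>Ut U z\<bar>))" by (rule finite_measure.integrable_const[OF gD_fin])
    show "integrable D (\<lambda>e. Max (range (\<lambda>z. \<bar>e $ z\<bar>)))" using gD by (simp add: good_def)
  qed
  show "emx U \<in> borel_measurable D"
    using emx_measurable measurable_cong_sets[OF gD_sets refl] by blast
  show "AE x in D. norm (emx U x) \<le> norm ((\<Sum>z\<in>UNIV. \<bar>Ut U z\<bar>) + Max (range (\<lambda>z. \<bar>x $ z\<bar>)))"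
  proof (rule AE_I2)
    fix x
    have "\<bar>emx U x\<bar> \<le> (\<Sum>z\<in>UNIV. \<bar>Ut U z\<bar>) + Max (range (\<lambda>z. \<bar>x $ z\<bar>))" by (rule emx_bound)
    then show "norm (emx U x) \<le> norm ((\<Sum>z\<in>UNIV. \<bar>Ut U z\<bar>) + Max (range (\<lambda>z. \<bar>x $ z\<bar>)))"
      by simp
  qed
qed

end



lemma tie_null:
  fixes a b :: "'o::finite" and c :: real
  assumes "a \<noteq> b"
  shows "{e::real^'o. e$a - e$b = c} \<in> null_sets lborel"
proof -
  let ?mn = "axis a 1 - axis b (1::real) :: real^'o"
  have eq: "{e::real^'o. e$a - e$b = c} = {x. ?mn \<bullet> x = c}"
    by (auto simp: inner_diff_left inner_axis')
  have "negligible {x. ?mn \<bullet> x = c}"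
    by (metis assms axis_index_axis eq_iff_diff_eq_0 negligible_hyperplane)
  then have "{x. ?mn \<bullet> x = c} \<in> null_sets lebesgue"
    by (simp add: negligible_iff_null_sets)
  moreover have "{x. ?mn \<bullet> x = c} \<in> sets lborel"
    by simp
  ultimately show ?thesis
    unfolding eq using null_sets_completion_iff by blast
qed

definition pp :: "(real^('i::finite option)) measure \<Rightarrow> ('i \<Rightarrow> real) \<Rightarrow> 'i \<Rightarrow> real" where
  "pp D U y = measure D (Astr U (Some y))"

definition gW :: "('i::finite \<Rightarrow> real) \<Rightarrow> ('i \<Rightarrow> real) \<Rightarrow> real^('i option) \<Rightarrow> real" where
  "gW U W e = emx (\<lambda>y. U y + W y) e - emx U e - (\<Sum>y\<in>UNIV. indicator (Astr U (Some y)) e * W y)"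

lemma gW_Astr:
  assumes "e \<in> Astr U b"
  shows "Ut U a + Ut W a + e$a - (Ut U b + e$b) - Ut W b \<le> gW U W e"
proof -
  have "Ut (\<lambda>y. U y + W y) a + e$a \<le> emx (\<lambda>y. U y + W y) e" by (rule emx_ge)
  then show ?thesis
    unfolding gW_def sum_ind_Astr[OF assms] emx_Astr[OF assms] Ut_add by simp
qed

lemma gW_Astr0:
  assumes "e \<in> Astr U b"
  shows "0 \<le> gW U W e"
  using gW_Astr[OF assms, of b W] by simp

context
  fixes D :: "(real^('i::finite option)) measure"
  assumes gD: "good D"
begin

lemma Astr_sets: "Astr U z \<in> sets D"
  unfolding gD_sets[OF gD] by (rule borel_open[OF open_Astr])

lemma ties_AE: "AE e in D. \<forall>a b. a \<noteq> b \<longrightarrow> Ut U a + e$a \<noteq> Ut U b + e$b"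
proof -
  have "AE e in D. \<forall>a\<in>UNIV. \<forall>b\<in>UNIV. a \<noteq> b \<longrightarrow> Ut U a + e$a \<noteq> Ut U b + e$b"
  proof (intro AE_finite_allI)
    fix a b :: "'i option"
    show "AE e in D. a \<noteq> b \<longrightarrow> Ut U a + e$a \<noteq> Ut U b + e$b"
    proof (cases "a = b")
      case True then show ?thesis by simp
    next
      case False
      have "{e::real^('i option). e$a - e$b = Ut U b - Ut U a} \<in> null_sets lborel"
        using tie_null[OF False] .
      then have N: "{e::real^('i option). e$a - e$b = Ut U b - Ut U a} \<in> null_sets D"
        using gD by (auto simp: good_def absolutely_continuous_def)
      show ?thesis
        by (rule AE_I'[OF N]) (auto simp: algebra_simps)
    qed
  qed simp_all
  then show ?thesis by simp
qed

lemma Astr_AE: "AE e in D. \<exists>z. e \<in> Astr U z"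
  using ties_AE[of U] by (rule eventually_mono) (rule notie_Astr)

lemma gW_AE: "AE e in D. 0 \<le> gW U W e"
  using Astr_AE[of U] by (rule eventually_mono) (auto intro: gW_Astr0)

lemma int_ind: "integrable D (\<lambda>e. indicator (Astr U z) e * (c::real))"
proof -
  have "emeasure D (Astr U z) < \<infinity>"
    using finite_measure.emeasure_finite[OF gD_fin[OF gD]] by (simp add: less_top[symmetric])
  then have "integrable D (indicator (Astr U z) :: _ \<Rightarrow> real)"
    using Astr_sets by simp
  then show ?thesis by (rule integrable_mult_left)
qed

lemma int_sum_ind: "integrable D (\<lambda>e. \<Sum>y\<in>UNIV. indicator (Astr U (Some y)) e * (W y::real))"
  by (rule Bochner_Integration.integrable_sum) (rule int_ind)

lemma gW_int: "integrable D (gW U W)"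
  unfolding gW_def
  by (intro Bochner_Integration.integrable_diff int_sum_ind gD_int_emx[OF gD])

lemma gW_integral:
  "integral\<^sup>L D (gW U W) = emax_men D (\<lambda>y. U y + W y) - emax_men D U - (\<Sum>y\<in>UNIV. pp D U y * W y)"
proof -
  have "integral\<^sup>L D (gW U W) = integral\<^sup>L D (emx (\<lambda>y. U y + W y)) - integral\<^sup>L D (emx U)
      - integral\<^sup>L D (\<lambda>e. \<Sum>y\<in>UNIV. indicator (Astr U (Some y)) e * W y)"
    unfolding gW_def
    by (subst Bochner_Integration.integral_diff; (intro Bochner_Integration.integrable_diff int_sum_ind gD_int_emx[OF gD])?)+ (rule refl)
  also have "integral\<^sup>L D (\<lambda>e. \<Sum>y\<in>UNIV. indicator (Astr U (Some y)) e * W y)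
     = (\<Sum>y\<in>UNIV. pp D U y * W y)"
    by (subst Bochner_Integration.integral_sum, rule int_ind) (simp add: pp_def gD_space[OF gD])
  finally show ?thesis by (simp add: emax_men_eq)
qed

lemma subgrad: "emax_men D U + (\<Sum>y\<in>UNIV. pp D U y * W y) \<le> emax_men D (\<lambda>y. U y + W y)"
proof -
  have "0 \<le> integral\<^sup>L D (gW U W)" by (rule integral_nonneg_AE[OF gW_AE])
  then show ?thesis unfolding gW_integral by simp
qed

end



context
  fixes D :: "(real^('i::finite option)) measure"
  assumes gD: "good D"
begin

lemma Astr_disj': "e \<in> Astr U z1 \<Longrightarrow> e \<in> Astr U z2 \<Longrightarrow> z1 = z2"
  using Astr_disj by blast

lemma R_sets: "{e. e \<in> Astr U b \<and> Ut U b + e$b - \<delta> < Ut U a + e$a} \<in> sets D"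
proof -
  have "open {e::real^('i option). Ut U b + e$b - \<delta> < Ut U a + e$a}"
    by (intro open_Collect_less continuous_intros)
  then have "open (Astr U b \<inter> {e. Ut U b + e$b - \<delta> < Ut U a + e$a})"
    using open_Astr by blast
  moreover have "Astr U b \<inter> {e. Ut U b + e$b - \<delta> < Ut U a + e$a} = {e. e \<in> Astr U b \<and> Ut U b + e$b - \<delta> < Ut U a + e$a}"
    by auto
  ultimately show ?thesis unfolding gD_sets[OF gD] using borel_open by auto
qed

lemma R_pos:
  assumes ab: "a \<noteq> b" and d: "\<delta> > 0"
  shows "0 < measure D {e. e \<in> Astr U b \<and> Ut U b + e$b - \<delta> < Ut U a + e$a}"
proof -
  have "open {e::real^('i option). Ut U b + e$b - \<delta> < Ut U a + e$a}"
    by (intro open_Collect_less continuous_intros)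
  then have op: "open (Astr U b \<inter> {e. Ut U b + e$b - \<delta> < Ut U a + e$a})"
    using open_Astr by blast
  define w :: "real^('i option)" where
    "w = (\<chi> z. if z = b then - Ut U b else if z = a then - Ut U a - \<delta>/2 else - Ut U z - 1)"
  have "w \<in> Astr U b" unfolding Astr_def w_def using ab d by auto
  moreover have "Ut U b + w$b - \<delta> < Ut U a + w$a" unfolding w_def using ab d by auto
  ultimately have "Astr U b \<inter> {e. Ut U b + e$b - \<delta> < Ut U a + e$a} \<noteq> {}" by blast
  from gD_open_pos[OF gD op this] show ?thesis
    by (simp add: Int_def)
qed

lemma Astr_pos: "0 < measure D (Astr U b)"
proof -
  define w :: "real^('i option)" where
    "w = (\<chi> z. if z = b then - Ut U b else - Ut U z - 1)"
  have "w \<in> Astr U b" unfolding Astr_def w_def by auto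
  then show ?thesis using gD_open_pos[OF gD open_Astr] by blast
qed

lemma pp_nonneg: "0 \<le> pp D U y"
  by (simp add: pp_def)

lemma pp_sum_lt1: "(\<Sum>y\<in>UNIV. pp D U y) < 1"
proof -
  interpret P: prob_space D using gD_prob[OF gD] .
  have "(\<Sum>y\<in>UNIV. pp D U y) = measure D (\<Union>y\<in>UNIV. Astr U (Some y))"
    unfolding pp_def
    by (rule P.finite_measure_finite_Union[symmetric])
       (auto simp: Astr_sets[OF gD] disjoint_family_on_def dest: Astr_disj')
  moreover have "measure D (\<Union>y\<in>UNIV. Astr U (Some y)) + measure D (Astr U None)
       = measure D ((\<Union>y\<in>UNIV. Astr U (Some y)) \<union> Astr U None)"
    by (rule P.finite_measure_Union[symmetric])
       (auto simp: Astr_sets[OF gD] dest: Astr_disj')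
  moreover have "measure D ((\<Union>y\<in>UNIV. Astr U (Some y)) \<union> Astr U None) \<le> 1"
    by simp
  moreover have "0 < measure D (Astr U None)" by (rule Astr_pos)
  ultimately show ?thesis by linarith
qed

lemma coer:
  assumes eps: "\<epsilon> > 0"
  shows "\<exists>c>0. \<forall>W. \<epsilon> \<le> \<bar>W k\<bar> \<longrightarrow>
     c * \<bar>W k\<bar> \<le> emax_men D (\<lambda>y. U y + W y) - emax_men D U - (\<Sum>y\<in>UNIV. pp D U y * W y)"
proof -
  define R where "R b a = {e. e \<in> Astr U b \<and> Ut U b + e$b - \<epsilon>/2 < Ut U a + e$a}" for b a
  define c where "c = min (measure D (R None (Some k))) (measure D (R (Some k) None)) / 2"
  have c0: "c > 0" unfolding c_def R_def using eps by (auto intro!: R_pos)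
  have "c * \<bar>W k\<bar> \<le> emax_men D (\<lambda>y. U y + W y) - emax_men D U - (\<Sum>y\<in>UNIV. pp D U y * W y)"
    if W: "\<epsilon> \<le> \<bar>W k\<bar>" for W
  proof -
    obtain a b where ab: "Ut W a - Ut W b = \<bar>W k\<bar>" and mR: "2 * c \<le> measure D (R b a)"
    proof (cases "0 \<le> W k")
      case True
      show ?thesis by (rule that[of "Some k" None]) (use True in \<open>auto simp: Ut_def c_def\<close>)
    next
      case False
      show ?thesis by (rule that[of None "Some k"]) (use False in \<open>auto simp: Ut_def c_def\<close>)
    qed
    have Rs: "R b a \<in> sets D" unfolding R_def by (rule R_sets)
    have "AE e in D. indicator (R b a) e * (\<bar>W k\<bar> / 2) \<le> gW U W e"
      using gW_AE[OF gD, of U W]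
    proof (rule eventually_mono)
      fix e assume g0: "0 \<le> gW U W e"
      show "indicator (R b a) e * (\<bar>W k\<bar> / 2) \<le> gW U W e"
      proof (cases "e \<in> R b a")
        case True
        then have eA: "e \<in> Astr U b" and lt: "Ut U b + e$b - \<epsilon>/2 < Ut U a + e$a"
          unfolding R_def by auto
        have "Ut U a + Ut W a + e$a - (Ut U b + e$b) - Ut W b \<le> gW U W e"
          by (rule gW_Astr[OF eA])
        then show ?thesis using True lt ab W by simp
      next
        case False then show ?thesis using g0 by simp
      qed
    qed
    then have "integral\<^sup>L D (\<lambda>e. indicator (R b a) e * (\<bar>W k\<bar> / 2)) \<le> integral\<^sup>L D (gW U W)"
    proof (rule integral_mono_AE[rotated 2])
      show "integrable D (gW U W)" by (rule gW_int[OF gD])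
      have "emeasure D (R b a) < \<infinity>"
        using finite_measure.emeasure_finite[OF gD_fin[OF gD]] by (simp add: less_top[symmetric])
      then have "integrable D (indicator (R b a) :: _ \<Rightarrow> real)" using Rs by simp
      then show "integrable D (\<lambda>e. indicator (R b a) e * (\<bar>W k\<bar> / 2))"
        by (rule integrable_mult_left)
    qed
    moreover have "integral\<^sup>L D (\<lambda>e. indicator (R b a) e * (\<bar>W k\<bar> / 2)) = measure D (R b a) * (\<bar>W k\<bar> / 2)"
      by (simp add: gD_space[OF gD])
    moreover have "c * \<bar>W k\<bar> \<le> measure D (R b a) * (\<bar>W k\<bar> / 2)"
    proof -
      have "2 * c * \<bar>W k\<bar> \<le> measure D (R b a) * \<bar>W k\<bar>"
        by (rule mult_right_mono[OF mR]) simp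
      then show ?thesis by simp
    qed
    ultimately show ?thesis using gW_integral[OF gD, of U W] by linarith
  qed
  with c0 show ?thesis by blast
qed

end



lemma real_eq_from_sums:
  fixes a b :: "'i \<Rightarrow> real"
  assumes "finite I" "\<And>i. i \<in> I \<Longrightarrow> a i \<le> b i" "sum b I \<le> sum a I" "j \<in> I"
  shows "a j = b j"
proof (rule ccontr)
  assume "a j \<noteq> b j"
  then have "a j < b j" using assms(2)[OF assms(4)] by simp
  then have "sum a I < sum b I"
    using assms by (intro sum_strict_mono_ex1) auto
  then show False using assms(3) by simp
qed

lemma side:
  fixes P :: "(real^('i::finite option)) measure"
    and M :: "'i \<Rightarrow> ('b::topological_space) measure"
    and pr :: "'b \<Rightarrow> real^('i option)" and u :: "real^('i option) \<Rightarrow> real"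
    and Up :: "'i \<Rightarrow> real" and n :: real
  assumes gP: "good P" and n0: "0 < n"
    and Ms: "\<And>i. finite_measure (M i)" "\<And>i. sets (M i) = sets borel"
    and prm: "pr \<in> borel_measurable borel"
    and marg: "\<And>A. A \<in> sets borel \<Longrightarrow> (\<Sum>i\<in>UNIV. emeasure (M i) (pr -` A)) \<le> ennreal n * emeasure P A"
    and um: "u \<in> borel_measurable borel"
    and u0: "\<And>e. e$None \<le> u e"
    and uU: "\<And>e i. Up i + e$Some i \<le> u e"
    and AEm: "\<And>i. AE q in M i. u (pr q) = Up i + pr q $ Some i"
    and sing: "ennreal n * emeasure P {e. e$None < u e} = (\<Sum>i\<in>UNIV. emeasure (M i) (pr -` {e. e$None < u e}))"
  shows "measure (M i) (space (M i)) = n * pp P Up i"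
proof -
  have spM: "space (M j) = UNIV" for j using sets_eq_imp_space_eq[OF Ms(2)[of j]] by simp
  have UNIVM: "UNIV \<in> sets (M j)" for j using sets.top[of "M j"] spM[of j] by simp
  have prs: "pr -` A \<in> sets (M j)" if "A \<in> sets borel" for A j
    using measurable_sets[OF prm that] Ms(2)[of j] by simp
  have uge: "Ut Up z + e$z \<le> u e" for z e
    using u0 uU by (cases z) (auto simp: Ut_def)
  define C where "C j = {e. \<forall>z. Ut Up z + e$z \<le> Ut Up (Some j) + e$(Some j)}" for j
  have Cb: "C j \<in> sets borel" for j
  proof -
    have "C j = (\<Inter>z. {e. Ut Up z + e$z \<le> Ut Up (Some j) + e$(Some j)})" by (auto simp: C_def)
    moreover have "closed {e::real^('i option). Ut Up z + e$z \<le> Ut Up (Some j) + e$(Some j)}" for z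
      by (intro closed_Collect_le continuous_intros)
    ultimately have "closed (C j)" by auto
    then show ?thesis by (rule borel_closed)
  qed
  have step1: "emeasure (M j) (space (M j)) \<le> ennreal n * emeasure P (Astr Up (Some j))" for j
  proof -
    have "emeasure (M j) (pr -` C j) = emeasure (M j) (space (M j))"
    proof (rule emeasure_eq_AE)
      show "AE x in M j. (x \<in> pr -` C j) = (x \<in> space (M j))"
        using AEm[of j]
      proof (rule eventually_mono)
        fix q assume q: "u (pr q) = Up j + pr q $ Some j"
        have "pr q \<in> C j" unfolding C_def using uge[of _ "pr q"] q by (auto simp: Ut_def)
        then show "(q \<in> pr -` C j) = (q \<in> space (M j))" by (simp add: spM)
      qed
    qed (auto simp: prs[OF Cb])
    moreover have "emeasure (M j) (pr -` C j) \<le> (\<Sum>i\<in>UNIV. emeasure (M i) (pr -` C j))"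
      by (rule member_le_sum) auto
    moreover have "(\<Sum>i\<in>UNIV. emeasure (M i) (pr -` C j)) \<le> ennreal n * emeasure P (C j)"
      by (rule marg[OF Cb])
    moreover have "emeasure P (C j) = emeasure P (Astr Up (Some j))"
    proof (rule emeasure_eq_AE)
      show "AE x in P. (x \<in> C j) = (x \<in> Astr Up (Some j))"
        using ties_AE[OF gP, of Up]
      proof (rule eventually_mono)
        fix e assume nt: "\<forall>a b. a \<noteq> b \<longrightarrow> Ut Up a + e $ a \<noteq> Ut Up b + e $ b"
        show "(e \<in> C j) = (e \<in> Astr Up (Some j))"
        proof
          assume "e \<in> C j"
          then have le: "\<And>z. Ut Up z + e$z \<le> Ut Up (Some j) + e$(Some j)" unfolding C_def by auto
          show "e \<in> Astr Up (Some j)" unfolding Astr_def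
          proof (intro CollectI allI impI)
            fix z' assume "z' \<noteq> Some j"
            then have "Ut Up z' + e$z' \<noteq> Ut Up (Some j) + e$(Some j)" using nt by blast
            with le[of z'] show "Ut Up z' + e$z' < Ut Up (Some j) + e$(Some j)" by simp
          qed
        next
          assume "e \<in> Astr Up (Some j)"
          then have lt: "\<And>z. z \<noteq> Some j \<Longrightarrow> Ut Up z + e$z < Ut Up (Some j) + e$(Some j)"
            unfolding Astr_def by auto
          show "e \<in> C j" unfolding C_def
          proof (intro CollectI allI)
            fix z show "Ut Up z + e$z \<le> Ut Up (Some j) + e$(Some j)"
              using lt[of z] by (cases "z = Some j") auto
          qed
        qed
      qed
      show "C j \<in> sets P" using Cb gD_sets[OF gP] by simp
      show "Astr Up (Some j) \<in> sets P" by (rule Astr_sets[OF gP])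
    qed
    ultimately show ?thesis by (metis order_trans)
  qed
  define S where "S = {e. e$None < u e}"
  have Sb: "S \<in> sets borel" unfolding S_def using um by measurable
  have AS: "Astr Up (Some j) \<subseteq> S" for j
  proof
    fix e assume "e \<in> Astr Up (Some j)"
    then have "Ut Up None + e$None < Ut Up (Some j) + e$Some j" unfolding Astr_def by auto
    then show "e \<in> S" using uge[of "Some j" e] by (simp add: S_def Ut_def)
  qed
  have step2: "(\<Sum>i\<in>UNIV. ennreal n * emeasure P (Astr Up (Some i))) \<le> (\<Sum>i\<in>UNIV. emeasure (M i) (space (M i)))"
  proof -
    have "(\<Sum>i\<in>UNIV. ennreal n * emeasure P (Astr Up (Some i))) = ennreal n * (\<Sum>i\<in>UNIV. emeasure P (Astr Up (Some i)))"
      by (simp add: sum_distrib_left)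
    also have "(\<Sum>i\<in>UNIV. emeasure P (Astr Up (Some i))) = emeasure P (\<Union>i\<in>UNIV. Astr Up (Some i))"
      by (rule sum_emeasure) (auto simp: Astr_sets[OF gP] disjoint_family_on_def dest: Astr_disj'[OF gP])
    also have "emeasure P (\<Union>i\<in>UNIV. Astr Up (Some i)) \<le> emeasure P S"
      using AS Sb gD_sets[OF gP] by (intro emeasure_mono) auto
    finally have "(\<Sum>i\<in>UNIV. ennreal n * emeasure P (Astr Up (Some i))) \<le> ennreal n * emeasure P S"
      by (simp add: mult_left_mono)
    also have "\<dots> = (\<Sum>i\<in>UNIV. emeasure (M i) (pr -` S))" using sing unfolding S_def .
    also have "\<dots> \<le> (\<Sum>i\<in>UNIV. emeasure (M i) (space (M i)))"
      by (intro sum_mono emeasure_mono) (auto simp: spM UNIVM)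
    finally show ?thesis .
  qed
  define a where "a j = measure (M j) (space (M j))" for j
  define b where "b j = n * pp P Up j" for j
  have ea: "emeasure (M j) (space (M j)) = ennreal (a j)" for j
    unfolding a_def by (rule finite_measure.emeasure_eq_measure[OF Ms(1)])
  have eb: "ennreal n * emeasure P (Astr Up (Some j)) = ennreal (b j)" for j
    unfolding b_def pp_def using finite_measure.emeasure_eq_measure[OF gD_fin[OF gP]] n0
    by (simp add: ennreal_mult)
  have a0: "0 \<le> a j" for j by (simp add: a_def)
  have b0: "0 \<le> b j" for j using n0 by (simp add: b_def pp_def)
  have ab: "a j \<le> b j" for j using step1[of j] unfolding ea eb using b0 by (simp add: ennreal_le_iff)
  have "ennreal (sum b UNIV) \<le> ennreal (sum a UNIV)"
    using step2 unfolding ea eb using a0 b0 by (simp add: sum_ennreal)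
  then have "sum b UNIV \<le> sum a UNIV" using a0 by (simp add: ennreal_le_iff sum_nonneg)
  then have "a i = b i" by (intro real_eq_from_sums[of UNIV a b]) (auto simp: ab)
  then show ?thesis by (simp add: a_def b_def)
qed



lemma emax_women_men: "emax_women D U = emax_men D U"
  by (simp add: emax_men_eq emax_women_eq)

lemma sum_prod_UNIV:
  fixes f :: "'x::finite \<times> 'y::finite \<Rightarrow> real"
  shows "(\<Sum>p\<in>UNIV. f p) = (\<Sum>x\<in>UNIV. \<Sum>y\<in>UNIV. f (x, y))"
  by (simp add: sum.cartesian_product UNIV_Times_UNIV[symmetric] del: UNIV_Times_UNIV)

lemma sum_swap_UNIV:
  fixes f :: "'x::finite \<times> 'y::finite \<Rightarrow> real"
  shows "(\<Sum>q\<in>UNIV. f (snd q, fst q)) = (\<Sum>p\<in>UNIV. f p)"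
  by (rule sum.reindex_bij_witness[of _ prod.swap prod.swap]) auto

lemma joint_props:
  fixes n :: "'x::finite \<Rightarrow> real" and P :: "'x \<Rightarrow> (real^('y::finite option)) measure"
    and Uz \<mu> :: "'x \<times> 'y \<Rightarrow> real"
  assumes gP: "\<And>x. 0 < n x \<and> good (P x)"
    and mueq: "\<And>x y. \<mu> (x, y) = n x * pp (P x) (\<lambda>y. Uz (x, y)) y"
  shows "Gtot n P Uz + (\<Sum>p\<in>UNIV. \<mu> p * W p) \<le> Gtot n P (\<lambda>p. Uz p + W p)"
    and "\<epsilon> > 0 \<Longrightarrow> \<exists>c>0. \<forall>W. \<epsilon> \<le> \<bar>W k\<bar> \<longrightarrow>
           c * \<bar>W k\<bar> \<le> Gtot n P (\<lambda>p. Uz p + W p) - Gtot n P Uz - (\<Sum>p\<in>UNIV. \<mu> p * W p)"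
proof -
  define Bx where "Bx W x = emax_men (P x) (\<lambda>y. Uz (x, y) + W (x, y)) - emax_men (P x) (\<lambda>y. Uz (x, y))
      - (\<Sum>y\<in>UNIV. pp (P x) (\<lambda>y. Uz (x, y)) y * W (x, y))" for W x
  have Bx0: "0 \<le> Bx W x" for W x
    using subgrad[of "P x" "\<lambda>y. Uz (x, y)" "\<lambda>y. W (x, y)"] gP[of x] by (simp add: Bx_def)
  have BG: "Gtot n P (\<lambda>p. Uz p + W p) - Gtot n P Uz - (\<Sum>p\<in>UNIV. \<mu> p * W p) = (\<Sum>x\<in>UNIV. n x * Bx W x)" for W
    unfolding Gtot_def Bx_def sum_prod_UNIV mueq
    by (simp add: algebra_simps sum_subtractf sum_distrib_left mult.assoc sum.distrib)
  have BGge: "n x * Bx W x \<le> Gtot n P (\<lambda>p. Uz p + W p) - Gtot n P Uz - (\<Sum>p\<in>UNIV. \<mu> p * W p)" for W x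
    unfolding BG
    by (rule member_le_sum) (use gP Bx0 in \<open>auto intro: mult_nonneg_nonneg less_imp_le\<close>)
  show "Gtot n P Uz + (\<Sum>p\<in>UNIV. \<mu> p * W p) \<le> Gtot n P (\<lambda>p. Uz p + W p)"
  proof -
    have "0 \<le> (\<Sum>x\<in>UNIV. n x * Bx W x)"
      using gP Bx0 by (intro sum_nonneg) (auto intro: mult_nonneg_nonneg less_imp_le)
    then show ?thesis using BG[of W] by simp
  qed
  assume eps: "\<epsilon> > 0"
  obtain x y where k: "k = (x, y)" by (cases k)
  obtain c where c: "c > 0" and cW: "\<And>W. \<epsilon> \<le> \<bar>W y\<bar> \<Longrightarrow> c * \<bar>W y\<bar> \<le>
      emax_men (P x) (\<lambda>y'. Uz (x, y') + W y') - emax_men (P x) (\<lambda>y. Uz (x, y))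
      - (\<Sum>y'\<in>UNIV. pp (P x) (\<lambda>y. Uz (x, y)) y' * W y')"
    using coer[of "P x" \<epsilon> y "\<lambda>y. Uz (x, y)"] gP[of x] eps by auto
  have "n x * c * \<bar>W k\<bar> \<le> Gtot n P (\<lambda>p. Uz p + W p) - Gtot n P Uz - (\<Sum>p\<in>UNIV. \<mu> p * W p)"
    if W: "\<epsilon> \<le> \<bar>W k\<bar>" for W
  proof -
    have "c * \<bar>W k\<bar> \<le> Bx W x" using cW[of "\<lambda>y. W (x, y)"] W k by (simp add: Bx_def)
    then have "n x * (c * \<bar>W k\<bar>) \<le> n x * Bx W x" using gP[of x] by (simp add: mult_left_mono)
    then show ?thesis using BGge[of x W] by (simp add: mult.assoc)
  qed
  moreover have "n x * c > 0" using gP[of x] c by simp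
  ultimately show "\<exists>c>0. \<forall>W. \<epsilon> \<le> \<bar>W k\<bar> \<longrightarrow>
           c * \<bar>W k\<bar> \<le> Gtot n P (\<lambda>p. Uz p + W p) - Gtot n P Uz - (\<Sum>p\<in>UNIV. \<mu> p * W p)"
    by blast
qed

lemma Gtot_Htot: "Gtot m Q (\<lambda>q. F (snd q, fst q)) = Htot m Q F"
  by (simp add: Gtot_def Htot_def emax_women_men)

lemma jointH_props:
  fixes m :: "'y::finite \<Rightarrow> real" and Q :: "'y \<Rightarrow> (real^('x::finite option)) measure"
    and Vz \<mu> :: "'x \<times> 'y \<Rightarrow> real"
  assumes gQ: "\<And>y. 0 < m y \<and> good (Q y)"
    and mueq: "\<And>x y. \<mu> (x, y) = m y * pp (Q y) (\<lambda>x. Vz (x, y)) x"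
  shows "Htot m Q Vz + (\<Sum>p\<in>UNIV. \<mu> p * W p) \<le> Htot m Q (\<lambda>p. Vz p + W p)"
    and "\<epsilon> > 0 \<Longrightarrow> \<exists>c>0. \<forall>W. \<epsilon> \<le> \<bar>W k\<bar> \<longrightarrow>
           c * \<bar>W k\<bar> \<le> Htot m Q (\<lambda>p. Vz p + W p) - Htot m Q Vz - (\<Sum>p\<in>UNIV. \<mu> p * W p)"
proof -
  let ?V = "\<lambda>q. Vz (snd q, fst q)" and ?mu = "\<lambda>q. \<mu> (snd q, fst q)"
  have mu': "?mu (y, x) = m y * pp (Q y) (\<lambda>x. ?V (y, x)) x" for x y by (simp add: mueq)
  note J = joint_props[of m Q ?mu ?V, OF gQ mu']
  have sw: "(\<Sum>q\<in>UNIV. ?mu q * W (snd q, fst q)) = (\<Sum>p\<in>UNIV. \<mu> p * W p)" for W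
    using sum_swap_UNIV[of "\<lambda>p. \<mu> p * W p"] by simp
  show "Htot m Q Vz + (\<Sum>p\<in>UNIV. \<mu> p * W p) \<le> Htot m Q (\<lambda>p. Vz p + W p)"
    using J(1)[of "\<lambda>q. W (snd q, fst q)"]
    unfolding sw Gtot_Htot[of m Q Vz, symmetric] Gtot_Htot[of m Q "\<lambda>p. Vz p + W p", symmetric] by simp
  assume eps: "\<epsilon> > 0"
  obtain x y where k: "k = (x, y)" by (cases k)
  obtain c where c: "c > 0" and cW: "\<And>W. \<epsilon> \<le> \<bar>W (y, x)\<bar> \<Longrightarrow>
       c * \<bar>W (y, x)\<bar> \<le> Gtot m Q (\<lambda>q. ?V q + W q) - Gtot m Q ?V - (\<Sum>q\<in>UNIV. ?mu q * W q)"
    using J(2)[OF eps, of "(y, x)"] by blast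
  have "c * \<bar>W k\<bar> \<le> Htot m Q (\<lambda>p. Vz p + W p) - Htot m Q Vz - (\<Sum>p\<in>UNIV. \<mu> p * W p)"
    if W: "\<epsilon> \<le> \<bar>W k\<bar>" for W
    using cW[of "\<lambda>q. W (snd q, fst q)"] W k
    unfolding sw Gtot_Htot[of m Q Vz, symmetric] Gtot_Htot[of m Q "\<lambda>p. Vz p + W p", symmetric] by simp
  with c show "\<exists>c>0. \<forall>W. \<epsilon> \<le> \<bar>W k\<bar> \<longrightarrow>
           c * \<bar>W k\<bar> \<le> Htot m Q (\<lambda>p. Vz p + W p) - Htot m Q Vz - (\<Sum>p\<in>UNIV. \<mu> p * W p)"
    by blast
qed



lemma ev_sum_le1:
  fixes p :: "'a::finite \<Rightarrow> real"
  assumes "(\<Sum>a\<in>UNIV. p a) < 1"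
  shows "\<forall>\<^sub>F t in nhds (p k). (\<Sum>a\<in>UNIV. (p(k:=t)) a) \<le> 1"
proof -
  have eq: "(\<Sum>a\<in>UNIV. (p(k:=t)) a) = (\<Sum>a\<in>UNIV. p a) + (t - p k)" for t
    using sum_upd_mult[of p k t "\<lambda>_. 1"] by simp
  show ?thesis unfolding eventually_nhds_metric eq
    using assms by (intro exI[of _ "1 - (\<Sum>a\<in>UNIV. p a)"]) (auto simp: dist_real_def)
qed

lemma partial_Gx:
  assumes gD: "good D"
  shows "has_partial (Gstar_x D) (pp D U0) y (U0 y)"
proof (rule conj_partial[where f = "emax_men D"])
  show "emax_men D U0 + (\<Sum>a\<in>UNIV. pp D U0 a * W a) \<le> emax_men D (\<lambda>a. U0 a + W a)" for W
    by (rule subgrad[OF gD])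
  show "\<exists>c>0. \<forall>W. \<epsilon> \<le> \<bar>W y\<bar> \<longrightarrow> c * \<bar>W y\<bar>
     \<le> emax_men D (\<lambda>a. U0 a + W a) - emax_men D U0 - (\<Sum>a\<in>UNIV. pp D U0 a * W a)" if "\<epsilon> > 0" for \<epsilon>
    by (rule coer[OF gD that])
  show "\<forall>\<^sub>F t in nhds (pp D U0 y). Gstar_x D ((pp D U0)(y := t)) =
      Sup (range (\<lambda>U. ereal ((\<Sum>a\<in>UNIV. ((pp D U0)(y := t)) a * U a) - emax_men D U)))"
    using ev_sum_le1[OF pp_sum_lt1[OF gD], where k=y] by (rule eventually_mono) (simp add: Gstar_x_def)
qed

lemma partial_Hy:
  assumes gD: "good D"
  shows "has_partial (Hstar_y D) (pp D U0) y (U0 y)"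
proof (rule conj_partial[where f = "emax_men D"])
  show "emax_men D U0 + (\<Sum>a\<in>UNIV. pp D U0 a * W a) \<le> emax_men D (\<lambda>a. U0 a + W a)" for W
    by (rule subgrad[OF gD])
  show "\<exists>c>0. \<forall>W. \<epsilon> \<le> \<bar>W y\<bar> \<longrightarrow> c * \<bar>W y\<bar>
     \<le> emax_men D (\<lambda>a. U0 a + W a) - emax_men D U0 - (\<Sum>a\<in>UNIV. pp D U0 a * W a)" if "\<epsilon> > 0" for \<epsilon>
    by (rule coer[OF gD that])
  show "\<forall>\<^sub>F t in nhds (pp D U0 y). Hstar_y D ((pp D U0)(y := t)) =
      Sup (range (\<lambda>U. ereal ((\<Sum>a\<in>UNIV. ((pp D U0)(y := t)) a * U a) - emax_men D U)))"
    using ev_sum_le1[OF pp_sum_lt1[OF gD], where k=y] by (rule eventually_mono) (simp add: Hstar_y_def emax_women_men)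
qed

lemma has_partial_neg_sum:
  assumes f: "has_partial f p k a" and g: "has_partial g p k b"
  shows "has_partial (\<lambda>q. - f q - g q) p k (- a - b)"
proof -
  have ff: "\<forall>\<^sub>F t in nhds (p k). \<bar>f (p(k := t))\<bar> \<noteq> \<infinity>"
   and fd: "((\<lambda>t. real_of_ereal (f (p(k := t)))) has_real_derivative a) (at (p k))"
    using f by (auto simp: has_partial_def)
  have gf: "\<forall>\<^sub>F t in nhds (p k). \<bar>g (p(k := t))\<bar> \<noteq> \<infinity>"
   and gd: "((\<lambda>t. real_of_ereal (g (p(k := t)))) has_real_derivative b) (at (p k))"
    using g by (auto simp: has_partial_def)
  have both: "\<forall>\<^sub>F t in nhds (p k). \<bar>f (p(k := t))\<bar> \<noteq> \<infinity> \<and> \<bar>g (p(k := t))\<bar> \<noteq> \<infinity>"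
    using eventually_conj[OF ff gf] .
  have fin: "\<forall>\<^sub>F t in nhds (p k). \<bar>- f (p(k := t)) - g (p(k := t))\<bar> \<noteq> \<infinity>"
    using both by (rule eventually_mono) (auto elim!: ereal_cases[of "f _"] ereal_cases[of "g _"])
  have eq: "\<forall>\<^sub>F t in nhds (p k). real_of_ereal (- f (p(k := t)) - g (p(k := t)))
      = - real_of_ereal (f (p(k := t))) - real_of_ereal (g (p(k := t)))"
  proof (rule eventually_mono[OF both])
    fix t assume "\<bar>f (p(k := t))\<bar> \<noteq> \<infinity> \<and> \<bar>g (p(k := t))\<bar> \<noteq> \<infinity>"
    then obtain r s where "f (p(k := t)) = ereal r" "g (p(k := t)) = ereal s" by (auto elim!: ereal_cases[of "f _"] ereal_cases[of "g _"])
    then show "real_of_ereal (- f (p(k := t)) - g (p(k := t)))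
      = - real_of_ereal (f (p(k := t))) - real_of_ereal (g (p(k := t)))" by simp
  qed
  have "((\<lambda>t. - real_of_ereal (f (p(k := t))) - real_of_ereal (g (p(k := t)))) has_real_derivative (- a - b)) (at (p k))"
    by (intro DERIV_diff DERIV_minus fd gd)
  then have "((\<lambda>t. real_of_ereal (- f (p(k := t)) - g (p(k := t)))) has_real_derivative (- a - b)) (at (p k))"
    using DERIV_cong_ev[OF refl eq refl] by simp
  with fin show ?thesis by (simp add: has_partial_def)
qed



lemma hok_good: "heterogeneity_ok w D \<Longrightarrow> 0 < w y \<and> good (D y)"
  by (simp add: heterogeneity_ok_def good_def)

theorem theorem4:
  fixes \<Phi> :: "'x::finite \<times> 'y::finite \<Rightarrow> real"
    and n :: "'x \<Rightarrow> real" and m :: "'y \<Rightarrow> real"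
    and P :: "'x \<Rightarrow> (real^('y option)) measure"
    and Q :: "'y \<Rightarrow> (real^('x option)) measure"
    and \<pi> :: "'x \<Rightarrow> 'y \<Rightarrow> ((real^('y option)) \<times> (real^('x option))) measure"
    and u :: "'x \<Rightarrow> real^('y option) \<Rightarrow> real" and v :: "'y \<Rightarrow> real^('x option) \<Rightarrow> real"
    and \<mu> U V :: "'x \<times> 'y \<Rightarrow> real"
  assumes men: "heterogeneity_ok n P"
    and women: "heterogeneity_ok m Q"
    and stable: "stable_outcome \<Phi> n m P Q \<pi> u v"
    and mu: "\<mu> = group_matching \<pi>"
    and feasible: "\<forall>p. \<Phi> p \<le> U p + V p"
    and optimal: "\<forall>U' V'. (\<forall>p. \<Phi> p \<le> U' p + V' p) \<longrightarrow>
                     Gtot n P U + Htot m Q V \<le> Gtot n P U' + Htot m Q V'"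
  shows "(\<forall>x y. has_partial (Gstar n P) \<mu> (x, y) (U (x, y))
              \<and> has_partial (Hstar m Q) \<mu> (x, y) (V (x, y)))
       \<and> (\<forall>x y. U (x, y) + V (x, y) = \<Phi> (x, y)
              \<and> has_partial (entropy n m P Q) \<mu> (x, y) (- \<Phi> (x, y))
              \<and> (\<exists>a b. has_partial (Gstar_x (P x)) (\<lambda>y'. \<mu> (x, y') / n x) y a
                     \<and> has_partial (Hstar_y (Q y)) (\<lambda>x'. \<mu> (x', y) / m y) x b
                     \<and> \<Phi> (x, y) = a + b))"
proof -
  have gP: "\<And>x. 0 < n x \<and> good (P x)" using men by (rule hok_good)
  have gQ: "\<And>y. 0 < m y \<and> good (Q y)" using women by (rule hok_good)
  have st: "(\<forall>x y. finite_measure (\<pi> x y) \<and> sets (\<pi> x y) = sets borel) \<and> (\<forall>x A. A \<in> sets borel \<longrightarrow>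
        (\<Sum>y\<in>UNIV. emeasure (\<pi> x y) (fst -` A)) \<le> ennreal (n x) * emeasure (P x) A) \<and> (\<forall>y B. B \<in> sets borel \<longrightarrow>
        (\<Sum>x\<in>UNIV. emeasure (\<pi> x y) (snd -` B)) \<le> ennreal (m y) * emeasure (Q y) B) \<and> (\<forall>x. u x \<in> borel_measurable borel) \<and> (\<forall>y. v y \<in> borel_measurable borel) \<and> (\<forall>x e. e $ None \<le> u x e) \<and> (\<forall>y h. h $ None \<le> v y h) \<and> (\<forall>x y e h. \<Phi> (x, y) + e $ Some y + h $ Some x \<le> u x e + v y h) \<and> (\<forall>x y. AE p in \<pi> x y. u x (fst p) + v y (snd p) = \<Phi> (x, y) + fst p $ Some y + snd p $ Some x) \<and> (\<forall>x. ennreal (n x) * emeasure (P x) {e. e $ None < u x e}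
          = (\<Sum>y\<in>UNIV. emeasure (\<pi> x y) (fst -` {e. e $ None < u x e}))) \<and> (\<forall>y. ennreal (m y) * emeasure (Q y) {h. h $ None < v y h}
          = (\<Sum>x\<in>UNIV. emeasure (\<pi> x y) (snd -` {h. h $ None < v y h})))"
    using stable unfolding stable_outcome_def .
  have T1_: "\<forall>x y. finite_measure (\<pi> x y) \<and> sets (\<pi> x y) = sets borel"
    using st by (elim conjE) assumption
  have S2_: "\<forall>x A. A \<in> sets borel \<longrightarrow>
        (\<Sum>y\<in>UNIV. emeasure (\<pi> x y) (fst -` A)) \<le> ennreal (n x) * emeasure (P x) A"
    using st by (elim conjE) assumption
  have S3_: "\<forall>y B. B \<in> sets borel \<longrightarrow>
        (\<Sum>x\<in>UNIV. emeasure (\<pi> x y) (snd -` B)) \<le> ennreal (m y) * emeasure (Q y) B"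
    using st by (elim conjE) assumption
  have S4_: "\<forall>x. u x \<in> borel_measurable borel"
    using st by (elim conjE) assumption
  have S5_: "\<forall>y. v y \<in> borel_measurable borel"
    using st by (elim conjE) assumption
  have S6_: "\<forall>x e. e $ None \<le> u x e"
    using st by (elim conjE) assumption
  have S7_: "\<forall>y h. h $ None \<le> v y h"
    using st by (elim conjE) assumption
  have S8_: "\<forall>x y e h. \<Phi> (x, y) + e $ Some y + h $ Some x \<le> u x e + v y h"
    using st by (elim conjE) assumption
  have S9_: "\<forall>x y. AE p in \<pi> x y. u x (fst p) + v y (snd p) = \<Phi> (x, y) + fst p $ Some y + snd p $ Some x"
    using st by (elim conjE) assumption
  have S10_: "\<forall>x. ennreal (n x) * emeasure (P x) {e. e $ None < u x e}
          = (\<Sum>y\<in>UNIV. emeasure (\<pi> x y) (fst -` {e. e $ None < u x e}))"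
    using st by (elim conjE) assumption
  have S11_: "\<forall>y. ennreal (m y) * emeasure (Q y) {h. h $ None < v y h}
          = (\<Sum>x\<in>UNIV. emeasure (\<pi> x y) (snd -` {h. h $ None < v y h}))"
    using st by (elim conjE) assumption
  note S2 = S2_[rule_format]
  note S3 = S3_[rule_format]
  note S4 = S4_[rule_format]
  note S5 = S5_[rule_format]
  note S6 = S6_[rule_format]
  note S7 = S7_[rule_format]
  note S8 = S8_[rule_format]
  note S9 = S9_[rule_format]
  note S10 = S10_[rule_format]
  note S11 = S11_[rule_format]
  have S1: "\<And>x y. finite_measure (\<pi> x y)" "\<And>x y. sets (\<pi> x y) = sets borel" using T1_ by auto
  define V' where "V' = (\<lambda>(x, y). Inf (range (\<lambda>h. v y h - h$Some x)))"
  define U' where "U' = (\<lambda>p. \<Phi> p - V' p)"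
  have bdd: "bdd_below (range (\<lambda>h. v y h - h$Some x))" for x y
  proof (rule bdd_belowI2)
    fix h
    show "\<Phi> (x, y) - u x 0 \<le> v y h - h $ Some x" using S8[of x y 0 h] by simp
  qed
  have Ule: "U' (x, y) + e$Some y \<le> u x e" for x y e
  proof -
    have "\<Phi> (x, y) + e$Some y - u x e \<le> Inf (range (\<lambda>h. v y h - h$Some x))"
    proof (rule cINF_greatest)
      fix h show "\<Phi> (x, y) + e$Some y - u x e \<le> v y h - h$Some x" using S8[of x y e h] by simp
    qed simp
    then have "\<Phi> (x, y) + e$Some y - u x e \<le> V' (x, y)" by (simp add: V'_def)
    then show ?thesis by (simp add: U'_def)
  qed
  have Vle: "V' (x, y) + h$Some x \<le> v y h" for x y h
    using cINF_lower[OF bdd[of y x], of h] by (simp add: V'_def)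
  have UV: "U' p + V' p = \<Phi> p" for p by (simp add: U'_def)
  have AEu: "AE q in \<pi> x y. u x (fst q) = U' (x, y) + fst q $ Some y" for x y
    using S9[of x y]
  proof (rule eventually_mono)
    fix q assume "u x (fst q) + v y (snd q) = \<Phi> (x, y) + fst q $ Some y + snd q $ Some x"
    with Ule[of x y "fst q"] Vle[of x y "snd q"] UV[of "(x, y)"]
    show "u x (fst q) = U' (x, y) + fst q $ Some y" by linarith
  qed
  have AEv: "AE q in \<pi> x y. v y (snd q) = V' (x, y) + snd q $ Some x" for x y
    using S9[of x y]
  proof (rule eventually_mono)
    fix q assume "u x (fst q) + v y (snd q) = \<Phi> (x, y) + fst q $ Some y + snd q $ Some x"
    with Ule[of x y "fst q"] Vle[of x y "snd q"] UV[of "(x, y)"]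
    show "v y (snd q) = V' (x, y) + snd q $ Some x" by linarith
  qed
  have muM: "\<mu> (x, y) = measure (\<pi> x y) (space (\<pi> x y))" for x y
    by (simp add: mu group_matching_def)
  have prfst: "fst \<in> borel_measurable (borel :: ((real^('y option)) \<times> (real^('x option))) measure)"
    by (intro borel_measurable_continuous_onI continuous_intros)
  have prsnd: "snd \<in> borel_measurable (borel :: ((real^('y option)) \<times> (real^('x option))) measure)"
    by (intro borel_measurable_continuous_onI continuous_intros)
  have mu_men: "\<mu> (x, y) = n x * pp (P x) (\<lambda>y. U' (x, y)) y" for x y
    unfolding muM
    by (rule side[where M = "\<pi> x" and pr = fst and u = "u x" and Up = "\<lambda>y. U' (x, y)" and n = "n x"])
       (use gP S1 prfst S2 S4 S6 Ule AEu S10 in auto)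
  have mu_women: "\<mu> (x, y) = m y * pp (Q y) (\<lambda>x. V' (x, y)) x" for x y
    unfolding muM
    by (rule side[where M = "\<lambda>x. \<pi> x y" and pr = snd and u = "v y" and Up = "\<lambda>x. V' (x, y)" and n = "m y"])
       (use gQ S1 prsnd S3 S5 S7 Vle AEv S11 in auto)
  note Jg = joint_props[where n=n and P=P and Uz=U' and \<mu>=\<mu>, OF gP mu_men]
  note Jh = jointH_props[where m=m and Q=Q and Vz=V' and \<mu>=\<mu>, OF gQ mu_women]
  have mu0: "0 \<le> \<mu> p" for p by (cases p) (simp add: muM)
  define WU where "WU p = U p - U' p" for p
  define WV where "WV p = V p - V' p" for p
  have eU: "(\<lambda>p. U' p + WU p) = U" by (auto simp: WU_def)
  have eV: "(\<lambda>p. V' p + WV p) = V" by (auto simp: WV_def)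
  define BG where "BG = Gtot n P U - Gtot n P U' - (\<Sum>p\<in>UNIV. \<mu> p * WU p)"
  define BH where "BH = Htot m Q V - Htot m Q V' - (\<Sum>p\<in>UNIV. \<mu> p * WV p)"
  have BG0: "0 \<le> BG" using Jg(1)[of WU] unfolding eU BG_def by simp
  have BH0: "0 \<le> BH" using Jh(1)[of WV] unfolding eV BH_def by simp
  have feas': "\<forall>p. \<Phi> p \<le> U' p + V' p" using UV by simp
  have opt': "Gtot n P U + Htot m Q V \<le> Gtot n P U' + Htot m Q V'"
    using optimal feas' by blast
  have lin: "0 \<le> (\<Sum>p\<in>UNIV. \<mu> p * WU p) + (\<Sum>p\<in>UNIV. \<mu> p * WV p)"
  proof -
    have "(\<Sum>p\<in>UNIV. \<mu> p * WU p) + (\<Sum>p\<in>UNIV. \<mu> p * WV p) = (\<Sum>p\<in>UNIV. \<mu> p * (U p + V p - \<Phi> p))"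
      by (simp add: WU_def WV_def sum.distrib[symmetric] algebra_simps UV[symmetric])
    also have "0 \<le> \<dots>" using mu0 feasible by (intro sum_nonneg mult_nonneg_nonneg) auto
    finally show ?thesis by simp
  qed
  have BGz: "BG = 0" and BHz: "BH = 0"
    using BG0 BH0 opt' lin unfolding BG_def BH_def by linarith+
  have UU: "U = U'"
  proof
    fix k show "U k = U' k"
    proof (rule ccontr)
      assume "U k \<noteq> U' k"
      then have "0 < \<bar>WU k\<bar>" by (simp add: WU_def)
      from Jg(2)[OF this, of k] obtain c where c0: "c > 0" and cW: "\<forall>W. \<bar>WU k\<bar> \<le> \<bar>W k\<bar> \<longrightarrow> c * \<bar>W k\<bar> \<le> Gtot n P (\<lambda>p. U' p + W p) - Gtot n P U' - (\<Sum>p\<in>UNIV. \<mu> p * W p)"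
        by (elim exE conjE)
      have "c * \<bar>WU k\<bar> \<le> BG"
        using spec[OF cW, of WU] unfolding BG_def eU by simp
      moreover have "0 < c * \<bar>WU k\<bar>" using c0 \<open>0 < \<bar>WU k\<bar>\<close> by simp
      ultimately show False using BGz by simp
    qed
  qed
  have VV: "V = V'"
  proof
    fix k show "V k = V' k"
    proof (rule ccontr)
      assume "V k \<noteq> V' k"
      then have "0 < \<bar>WV k\<bar>" by (simp add: WV_def)
      from Jh(2)[OF this, of k] obtain c where c0: "c > 0" and cW: "\<forall>W. \<bar>WV k\<bar> \<le> \<bar>W k\<bar> \<longrightarrow> c * \<bar>W k\<bar> \<le> Htot m Q (\<lambda>p. V' p + W p) - Htot m Q V' - (\<Sum>p\<in>UNIV. \<mu> p * W p)"
        by (elim exE conjE)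
      have "c * \<bar>WV k\<bar> \<le> BH"
        using spec[OF cW, of WV] unfolding BH_def eV by simp
      moreover have "0 < c * \<bar>WV k\<bar>" using c0 \<open>0 < \<bar>WV k\<bar>\<close> by simp
      ultimately show False using BHz by simp
    qed
  qed
  note Jg' = Jg[folded UU] and Jh' = Jh[folded VV]
  have pG: "has_partial (Gstar n P) \<mu> k (U k)" for k
    by (rule conj_partial[where f = "Gtot n P"])
       (use Jg'(1) Jg'(2) in \<open>auto simp: Gstar_def\<close>)
  have pH: "has_partial (Hstar m Q) \<mu> k (V k)" for k
    by (rule conj_partial[where f = "Htot m Q"])
       (use Jh'(1) Jh'(2) in \<open>auto simp: Hstar_def\<close>)
  have sumUV: "U p + V p = \<Phi> p" for p using UV UU VV by simp
  have ent: "entropy n m P Q = (\<lambda>q. - Gstar n P q - Hstar m Q q)"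
    by (rule ext) (simp add: entropy_def)
  have pE: "has_partial (entropy n m P Q) \<mu> k (- \<Phi> k)" for k
  proof -
    have "- U k - V k = - \<Phi> k" using sumUV[of k] by simp
    then show ?thesis unfolding ent using has_partial_neg_sum[OF pG pH, of k] by simp
  qed
  have mx: "(\<lambda>y'. \<mu> (x, y') / n x) = pp (P x) (\<lambda>y. U (x, y))" for x
    using gP[of x] by (auto simp: mu_men UU)
  have my: "(\<lambda>x'. \<mu> (x', y) / m y) = pp (Q y) (\<lambda>x. V (x, y))" for y
    using gQ[of y] by (auto simp: mu_women VV)
  have px: "has_partial (Gstar_x (P x)) (\<lambda>y'. \<mu> (x, y') / n x) y (U (x, y))" for x y
    unfolding mx using partial_Gx[of "P x" "\<lambda>y. U (x, y)" y] gP[of x] by simp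
  have py: "has_partial (Hstar_y (Q y)) (\<lambda>x'. \<mu> (x', y) / m y) x (V (x, y))" for x y
    unfolding my using partial_Hy[of "Q y" "\<lambda>x. V (x, y)" x] gQ[of y] by simp
  show ?thesis
  proof (intro conjI allI)
    fix x y
    show "has_partial (Gstar n P) \<mu> (x, y) (U (x, y))" by (rule pG)
    show "has_partial (Hstar m Q) \<mu> (x, y) (V (x, y))" by (rule pH)
    show "U (x, y) + V (x, y) = \<Phi> (x, y)" by (rule sumUV)
    show "has_partial (entropy n m P Q) \<mu> (x, y) (- \<Phi> (x, y))" by (rule pE)
    show "\<exists>a b. has_partial (Gstar_x (P x)) (\<lambda>y'. \<mu> (x, y') / n x) y a
                     \<and> has_partial (Hstar_y (Q y)) (\<lambda>x'. \<mu> (x', y) / m y) x b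
                     \<and> \<Phi> (x, y) = a + b"
      using px[of x y] py[of y x] sumUV[of "(x, y)"] by (intro exI[of _ "U (x, y)"] exI[of _ "V (x, y)"]) auto
  qed
qed


end
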